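(* Consider a one-site PTM cascade with $n=1$ layer and positive $\overline{F},\overline{S}$. Let $\xi=\gamma\overline{F}/\delta$, $p_1(y)=\lambda y(\xi-y)$, $p_2(y)=(\delta+\gamma)y^2-\gamma(1/\delta+\overline{F}+\xi+\overline{S})y+\gamma\xi\overline{S}$, and $g=p_1/p_2$. Then $p_2$ has two positive real roots $\alpha_1<\alpha_2$ with $\alpha_1<\xi<\alpha_2$; $g$ is continuous and increasing on each of the intervals $(-\infty,\alpha_1)$, $(\alpha_1,\alpha_2)$, $(\alpha_2,\infty)$; $g(0)=0$ and $g(y)\to+\infty$ as $y\to\alpha_1^-$. Moreover, for every positive $\overline{E}$, at the BMSS one has $E=g(Y^0)$ and $Y^0\in(0,\alpha_1)$.
   Context: For $n=1$ the one-site PTM cascade has species $E,S^0,S^1,F,Y^0,Y^1$ with reactions $E+S^0\rightleftharpoons Y^0\to E+S^1$ (rate constants $a^0,b^0,c^0$) and $F+S^1\rightleftharpoons Y^1\to F+S^0$ (rate constants $a^1,b^1,c^1$), all positive, mass-action kinetics. Put $\delta=a^1/(b^1+c^1)$, $\gamma=(c^1/c^0)\delta$, $\lambda=\frac{b^0+c^0}{a^0}\gamma$. A steady state for total amounts $\overline{E},\overline{F},\overline{S}$ is a real solution of $Y^0=\gamma FS^1$, $Y^1=\delta FS^1$, $\lambda FS^1=S^0E$, $\overline{F}=F+Y^1$, $\overline{E}=E+Y^0$, $\overline{S}=S^0+S^1+Y^0+Y^1$. A BMSS is a steady state with positive total amounts and all concentrations nonnegative. Increasing means strictly increasing. *)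

theory Defs
  imports Complex_Main
begin

text \<open>One-site PTM cascade (n = 1). Rate constants a0 b0 c0 (for E) and a1 b1 c1 (for F).\<close>

definition ptm_delta :: "real \<Rightarrow> real \<Rightarrow> real \<Rightarrow> real" where
  "ptm_delta a1 b1 c1 = a1 / (b1 + c1)"

definition ptm_gamma :: "real \<Rightarrow> real \<Rightarrow> real \<Rightarrow> real \<Rightarrow> real" where
  "ptm_gamma c0 a1 b1 c1 = (c1 / c0) * ptm_delta a1 b1 c1"

definition ptm_lambda :: "real \<Rightarrow> real \<Rightarrow> real \<Rightarrow> real \<Rightarrow> real \<Rightarrow> real \<Rightarrow> real" where
  "ptm_lambda a0 b0 c0 a1 b1 c1 = ((b0 + c0) / a0) * ptm_gamma c0 a1 b1 c1"

definition ptm_steady_state ::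
  "real \<Rightarrow> real \<Rightarrow> real \<Rightarrow> real \<Rightarrow> real \<Rightarrow> real \<Rightarrow> real \<Rightarrow> real \<Rightarrow> real \<Rightarrow>
   real \<Rightarrow> real \<Rightarrow> real \<Rightarrow> real \<Rightarrow> real \<Rightarrow> real \<Rightarrow> bool" where
  "ptm_steady_state a0 b0 c0 a1 b1 c1 Ebar Fbar Sbar E S0 S1 F Y0 Y1 \<longleftrightarrow>
     Y0 = ptm_gamma c0 a1 b1 c1 * F * S1 \<and>
     Y1 = ptm_delta a1 b1 c1 * F * S1 \<and>
     ptm_lambda a0 b0 c0 a1 b1 c1 * F * S1 = S0 * E \<and>
     Fbar = F + Y1 \<and>
     Ebar = E + Y0 \<and>
     Sbar = S0 + S1 + Y0 + Y1"

definition ptm_BMSS ::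
  "real \<Rightarrow> real \<Rightarrow> real \<Rightarrow> real \<Rightarrow> real \<Rightarrow> real \<Rightarrow> real \<Rightarrow> real \<Rightarrow> real \<Rightarrow>
   real \<Rightarrow> real \<Rightarrow> real \<Rightarrow> real \<Rightarrow> real \<Rightarrow> real \<Rightarrow> bool" where
  "ptm_BMSS a0 b0 c0 a1 b1 c1 Ebar Fbar Sbar E S0 S1 F Y0 Y1 \<longleftrightarrow>
     0 < Ebar \<and> 0 < Fbar \<and> 0 < Sbar \<and>
     0 \<le> E \<and> 0 \<le> S0 \<and> 0 \<le> S1 \<and> 0 \<le> F \<and> 0 \<le> Y0 \<and> 0 \<le> Y1 \<and>
     ptm_steady_state a0 b0 c0 a1 b1 c1 Ebar Fbar Sbar E S0 S1 F Y0 Y1"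

end

theory Submission
  imports Defs
begin

lemma mono_helper:
  fixes f :: "real \<Rightarrow> real"
  assumes der: "\<And>z. z \<in> I \<Longrightarrow> \<exists>D. DERIV f z :> D \<and> D > 0"
    and conv: "\<And>x y z. x \<in> I \<Longrightarrow> y \<in> I \<Longrightarrow> x \<le> z \<Longrightarrow> z \<le> y \<Longrightarrow> z \<in> I"
  shows "strict_mono_on I f \<and> continuous_on I f"
proof
  show "strict_mono_on I f"
  proof (rule strict_mono_onI)
    fix r s assume "r \<in> I" "s \<in> I" "r < s"
    show "f r < f s"
    proof (rule DERIV_pos_imp_increasing[OF \<open>r < s\<close>])
      fix x assume "r \<le> x" "x \<le> s"
      hence "x \<in> I" using conv \<open>r \<in> I\<close> \<open>s \<in> I\<close> by blast
      thus "\<exists>y. DERIV f x :> y \<and> y > 0" using der by blast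
    qed
  qed
  show "continuous_on I f"
  proof (rule continuous_at_imp_continuous_on, rule ballI)
    fix x assume "x \<in> I"
    then obtain D where "DERIV f x :> D" using der by blast
    thus "isCont f x" by (rule DERIV_isCont)
  qed
qed

lemma core:
  fixes d ga lam Fb Sb :: real
  assumes pos: "0<d" "0<ga" "0<lam" "0<Fb" "0<Sb"
  defines "xi \<equiv> ga*Fb/d"
  defines "p1 \<equiv> (\<lambda>y::real. lam * y * (xi - y))"
    and "p2 \<equiv> (\<lambda>y::real. (d + ga) * y^2 - ga * (1 / d + Fb + xi + Sb) * y + ga * xi * Sb)"
  defines "g \<equiv> (\<lambda>y::real. p1 y / p2 y)"
  shows "\<exists>\<alpha>1 \<alpha>2. 0 < \<alpha>1 \<and> \<alpha>1 < xi \<and> xi < \<alpha>2 \<and>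
           {y. p2 y = 0} = {\<alpha>1, \<alpha>2} \<and>
           continuous_on {..<\<alpha>1} g \<and> strict_mono_on {..<\<alpha>1} g \<and>
           continuous_on {\<alpha>1<..<\<alpha>2} g \<and> strict_mono_on {\<alpha>1<..<\<alpha>2} g \<and>
           continuous_on {\<alpha>2<..} g \<and> strict_mono_on {\<alpha>2<..} g \<and>
           g 0 = 0 \<and>
           filterlim g at_top (at_left \<alpha>1) \<and>
           (\<forall>Ebar E S0 S1 F Y0 Y1. 0 < Ebar \<longrightarrow>
              (0 \<le> E \<and> 0 \<le> S0 \<and> 0 \<le> S1 \<and> 0 \<le> F \<and> 0 \<le> Y0 \<and> 0 \<le> Y1 \<and>
               Y0 = ga * F * S1 \<and> Y1 = d * F * S1 \<and> lam * F * S1 = S0 * E \<and>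
               Fb = F + Y1 \<and> Ebar = E + Y0 \<and> Sb = S0 + S1 + Y0 + Y1) \<longrightarrow>
              E = g Y0 \<and> 0 < Y0 \<and> Y0 < \<alpha>1)"
proof -
  define A where "A = d + ga"
  define B where "B = ga * (1 / d + Fb + xi + Sb)"
  define C where "C = ga * xi * Sb"
  define Dsc where "Dsc = B^2 - 4*A*C"
  have xid: "xi * d = ga * Fb" using pos unfolding xi_def by simp
  have xipos: "xi > 0" using pos unfolding xi_def by simp
  have Apos: "A > 0" using pos unfolding A_def by simp
  have Cpos: "C > 0" using pos xipos unfolding C_def by simp
  have p2eq: "\<And>y. p2 y = A*y^2 - B*y + C" unfolding p2_def A_def B_def C_def by simp
  have p2xi: "p2 xi = - ga * xi / d"
    using pos xid unfolding p2_def by (simp add: field_simps power2_eq_square)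
  have p2xineg: "p2 xi < 0" using p2xi pos xipos by simp
  have "4*A*p2 xi = (2*A*xi - B)^2 - Dsc"
    unfolding p2eq Dsc_def by (simp add: algebra_simps power2_eq_square)
  moreover have "4*A*p2 xi < 0" using Apos p2xineg by (simp add: mult_pos_neg)
  moreover have "(2*A*xi - B)^2 \<ge> 0" by simp
  ultimately have Dpos: "Dsc > 0" by linarith
  define s where "s = sqrt Dsc"
  have spos: "s > 0" using Dpos s_def by simp
  have s2: "s^2 = Dsc" using Dpos s_def by simp
  define \<alpha>1 where "\<alpha>1 = (B - s)/(2*A)"
  define \<alpha>2 where "\<alpha>2 = (B + s)/(2*A)"
  have fact: "\<And>y. p2 y = A*(y-\<alpha>1)*(y-\<alpha>2)"
  proof -
    fix y
    have "A*(y-\<alpha>1)*(y-\<alpha>2) = A*y^2 - B*y + (B^2 - s^2)/(4*A)"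
      using Apos unfolding \<alpha>1_def \<alpha>2_def by (simp add: field_simps power2_eq_square)
    also have "(B^2 - s^2)/(4*A) = C" using Apos s2 unfolding Dsc_def by (simp add: field_simps)
    finally show "p2 y = A*(y-\<alpha>1)*(y-\<alpha>2)" using p2eq by simp
  qed
  have a12: "\<alpha>1 < \<alpha>2" using spos Apos unfolding \<alpha>1_def \<alpha>2_def by (simp add: divide_strict_right_mono)
  have xibetw: "\<alpha>1 < xi \<and> xi < \<alpha>2"
  proof -
    have "A*(xi-\<alpha>1)*(xi-\<alpha>2) < 0" using fact p2xineg by simp
    hence "A*((xi-\<alpha>1)*(xi-\<alpha>2)) < 0" by (simp add: mult.assoc)
    hence "(xi-\<alpha>1)*(xi-\<alpha>2) < 0" using Apos by (simp add: mult_less_0_iff)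
    thus ?thesis using a12 by (auto simp: mult_less_0_iff)
  qed
  have a1pos: "\<alpha>1 > 0"
  proof -
    have "p2 0 = C" using p2eq by simp
    hence "A*\<alpha>1*\<alpha>2 > 0" using fact[of 0] Cpos by simp
    hence "A*(\<alpha>1*\<alpha>2) > 0" by (simp add: mult.assoc)
    hence "\<alpha>1*\<alpha>2 > 0" using Apos by (simp add: zero_less_mult_iff)
    thus ?thesis using xibetw xipos by (auto simp: zero_less_mult_iff)
  qed
  have roots: "{y. p2 y = 0} = {\<alpha>1, \<alpha>2}" using fact Apos by auto
  define D where "D = ga*(1/d + Sb)"
  have Dp: "D > 0" using pos unfolding D_def by (simp add: add_pos_pos)
  have numpos: "\<And>y. D*y^2 - 2*C*y + xi*C > 0"
  proof -
    fix y
    have "xi*D - C = ga*xi/d" unfolding D_def C_def using pos by (simp add: field_simps)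
    hence "xi*D - C > 0" using pos xipos by simp
    have "D*(D*y^2 - 2*C*y + xi*C) = (D*y - C)^2 + C*(xi*D - C)"
      by (simp add: algebra_simps power2_eq_square)
    also have "\<dots> > 0"
    proof -
      have "C*(xi*D - C) > 0" using \<open>xi*D - C > 0\<close> Cpos by simp
      moreover have "(D*y - C)^2 \<ge> 0" by simp
      ultimately show ?thesis by linarith
    qed
    finally show "D*y^2 - 2*C*y + xi*C > 0" using Dp by (simp add: zero_less_mult_iff)
  qed
  have der: "\<exists>Dv. DERIV g y :> Dv \<and> Dv > 0" if "p2 y \<noteq> 0" for y
  proof -
    have d1: "DERIV p1 y :> lam*(xi - 2*y)" unfolding p1_def
      by (auto intro!: derivative_eq_intros simp: algebra_simps)
    have d2: "DERIV p2 y :> 2*A*y - B" unfolding p2eq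
      by (auto intro!: derivative_eq_intros simp: algebra_simps)
    have dg: "DERIV g y :> (lam*(xi - 2*y) * p2 y - p1 y * (2*A*y - B)) / (p2 y * p2 y)"
      unfolding g_def by (rule DERIV_divide[OF d1 d2 that])
    have "lam*(xi - 2*y) * p2 y - p1 y * (2*A*y - B) = lam*((B - xi*A)*y^2 - 2*C*y + xi*C)"
      unfolding p2eq p1_def by (simp add: algebra_simps power2_eq_square)
    also have "B - xi*A = D" unfolding B_def A_def D_def using xid pos
      by (simp add: algebra_simps)
    finally have "lam*(xi - 2*y) * p2 y - p1 y * (2*A*y - B) > 0"
      using numpos pos by simp
    moreover have "p2 y * p2 y > 0" using that by (auto simp: zero_less_mult_iff)
    ultimately have "(lam*(xi - 2*y) * p2 y - p1 y * (2*A*y - B)) / (p2 y * p2 y) > 0"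
      by (rule divide_pos_pos)
    thus ?thesis using dg by blast
  qed
  have I1: "strict_mono_on {..<\<alpha>1} g \<and> continuous_on {..<\<alpha>1} g"
    by (rule mono_helper) (use der fact Apos a12 in auto)
  have I2: "strict_mono_on {\<alpha>1<..<\<alpha>2} g \<and> continuous_on {\<alpha>1<..<\<alpha>2} g"
    by (rule mono_helper) (use der fact Apos a12 in auto)
  have I3: "strict_mono_on {\<alpha>2<..} g \<and> continuous_on {\<alpha>2<..} g"
    by (rule mono_helper) (use der fact Apos a12 in auto)
  have g0: "g 0 = 0" unfolding g_def p1_def by simp
  have lim: "filterlim g at_top (at_left \<alpha>1)"
    unfolding g_def
  proof (rule LIM_at_top_divide)
    show "(p1 \<longlongrightarrow> p1 \<alpha>1) (at_left \<alpha>1)" unfolding p1_def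
      by (intro tendsto_intros)
    show "0 < p1 \<alpha>1" unfolding p1_def using pos a1pos xibetw by simp
    have "(p2 \<longlongrightarrow> p2 \<alpha>1) (at_left \<alpha>1)" unfolding p2eq
      by (intro tendsto_intros)
    thus "(p2 \<longlongrightarrow> 0) (at_left \<alpha>1)" using fact[of \<alpha>1] by simp
    show "\<forall>\<^sub>F x in at_left \<alpha>1. 0 < p2 x"
      using eventually_at_left_real[OF a1pos]
    proof (rule eventually_mono)
      fix x assume "x \<in> {0<..<\<alpha>1}"
      hence "(x-\<alpha>1)*(x-\<alpha>2) > 0" using a12 by (intro mult_neg_neg) auto
      hence "A*((x-\<alpha>1)*(x-\<alpha>2)) > 0" using Apos by simp
      thus "0 < p2 x" using fact[of x] by (simp add: mult.assoc)
    qed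
  qed
  have bmss: "E = g Y0 \<and> 0 < Y0 \<and> Y0 < \<alpha>1"
    if "0 < Ebar" and h: "0 \<le> E \<and> 0 \<le> S0 \<and> 0 \<le> S1 \<and> 0 \<le> F \<and> 0 \<le> Y0 \<and> 0 \<le> Y1 \<and>
               Y0 = ga * F * S1 \<and> Y1 = d * F * S1 \<and> lam * F * S1 = S0 * E \<and>
               Fb = F + Y1 \<and> Ebar = E + Y0 \<and> Sb = S0 + S1 + Y0 + Y1" for Ebar E S0 S1 F Y0 Y1
  proof -
    have hn: "0 \<le> E" "0 \<le> S0" "0 \<le> S1" "0 \<le> F" "0 \<le> Y0" "0 \<le> Y1"
      and hY0: "Y0 = ga*F*S1" and hY1: "Y1 = d*F*S1" and hl: "lam*F*S1 = S0*E"
      and hF: "Fb = F+Y1" and hE: "Ebar = E+Y0" and hS: "Sb = S0+S1+Y0+Y1"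
      using h by auto
    have Y0pos: "Y0 > 0"
    proof (rule ccontr)
      assume "\<not> Y0 > 0"
      hence Y00: "Y0 = 0" using hn by linarith
      hence FS0: "F*S1 = 0" using hY0 pos by (simp add: mult.assoc)
      hence "S0*E = 0" using hl by (metis mult.assoc mult_zero_right)
      moreover have "E > 0" using hE Y00 that(1) by simp
      ultimately have "S0 = 0" by simp
      have "Y1 = 0" using hY1 FS0 by (simp add: mult.assoc)
      hence "F = Fb" "S1 = Sb" using hF hS Y00 \<open>S0 = 0\<close> by auto
      thus False using FS0 pos by simp
    qed
    have FS1: "F*S1 = Y0/ga" using hY0 pos by simp
    have "F \<noteq> 0" "S1 \<noteq> 0" using Y0pos hY0 by auto
    hence Fp: "F > 0" and S1p: "S1 > 0" using hn by linarith+
    have "S0*E > 0" using hl Fp S1p pos by (metis mult_pos_pos)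
    hence "S0 \<noteq> 0" "E \<noteq> 0" by auto
    hence S0p: "S0 > 0" and Ep: "E > 0" using hn by linarith+
    have Y1: "Y1 = d/ga*Y0" using hY0 hY1 pos by simp
    have Feq: "F = d/ga*(xi - Y0)" using hF Y1 pos unfolding xi_def by (simp add: field_simps)
    have K: "ga/d*F = xi - Y0" using Feq pos by simp
    have L0: "ga*F*S0 = ga*F*Sb - ga*F*S1 - ga*F*Y0 - d*F*(ga*F*S1)"
      using hS hY1 by (simp add: algebra_simps)
    have L: "ga*F*S0 = ga*F*Sb - Y0 - (ga+d)*F*Y0"
      using L0 hY0 by (simp add: algebra_simps)
    have Fbe: "Fb = xi*d/ga" using xid pos by (simp add: field_simps)
    have p2Y: "p2 Y0 = ga^2/d * F * S0"
    proof -
      have "ga^2/d*F*S0 = ga/d*(ga*F*S0)" by (simp add: power2_eq_square)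
      also have "\<dots> = ga/d*(ga*F*Sb - Y0 - (ga+d)*F*Y0)" using L by simp
      also have "\<dots> = (ga/d*F)*(ga*Sb) - ga*Y0/d - (ga+d)*(ga/d*F)*Y0"
        using pos by (simp add: field_simps)
      also have "\<dots> = (xi-Y0)*(ga*Sb) - ga*Y0/d - (ga+d)*(xi-Y0)*Y0" using K by simp
      also have "\<dots> = p2 Y0" unfolding p2_def Fbe using pos
        by (simp add: field_simps power2_eq_square)
      finally show ?thesis by simp
    qed
    have p2Ypos: "p2 Y0 > 0" unfolding p2Y using pos Fp S0p by simp
    have "E * p2 Y0 = p1 Y0"
    proof -
      have "E * p2 Y0 = ga^2/d * F * (S0 * E)" unfolding p2Y by simp
      also have "S0*E = lam*Y0/ga" using hl FS1 by (metis mult.assoc times_divide_eq_right)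
      also have "ga^2/d * F * (lam*Y0/ga) = lam*Y0*(ga/d*F)" using pos
        by (simp add: field_simps power2_eq_square)
      also have "\<dots> = p1 Y0" unfolding p1_def K by simp
      finally show ?thesis .
    qed
    hence "E = g Y0" unfolding g_def using p2Ypos by (simp add: field_simps)
    moreover have "Y0 < xi"
    proof -
      have "ga/d*F > 0" using pos Fp by simp
      thus ?thesis using K by linarith
    qed
    moreover have "Y0 < \<alpha>1"
    proof (rule ccontr)
      assume "\<not> Y0 < \<alpha>1"
      hence "Y0 - \<alpha>1 \<ge> 0" "Y0 - \<alpha>2 < 0" using \<open>Y0 < xi\<close> xibetw by auto
      hence "A*(Y0-\<alpha>1)*(Y0-\<alpha>2) \<le> 0" using Apos
        by (simp add: mult_nonneg_nonpos)
      thus False using fact p2Ypos by simp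
    qed
    ultimately show ?thesis using Y0pos by simp
  qed
  show ?thesis
    apply (rule exI[of _ \<alpha>1], rule exI[of _ \<alpha>2])
    using a1pos xibetw roots I1 I2 I3 g0 lim bmss by blast
qed

theorem mainTheorem4:
  fixes a0 b0 c0 a1 b1 c1 Fbar Sbar :: real
  assumes "0 < a0" "0 < b0" "0 < c0" "0 < a1" "0 < b1" "0 < c1"
    and "0 < Fbar" "0 < Sbar"
  defines "\<delta> \<equiv> ptm_delta a1 b1 c1"
    and "\<gamma> \<equiv> ptm_gamma c0 a1 b1 c1"
    and "lam \<equiv> ptm_lambda a0 b0 c0 a1 b1 c1"
  defines "\<xi> \<equiv> \<gamma> * Fbar / \<delta>"
  defines "p1 \<equiv> (\<lambda>y::real. lam * y * (\<xi> - y))"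
    and "p2 \<equiv> (\<lambda>y::real. (\<delta> + \<gamma>) * y^2 - \<gamma> * (1 / \<delta> + Fbar + \<xi> + Sbar) * y + \<gamma> * \<xi> * Sbar)"
  defines "g \<equiv> (\<lambda>y::real. p1 y / p2 y)"
  shows "\<exists>\<alpha>1 \<alpha>2. 0 < \<alpha>1 \<and> \<alpha>1 < \<xi> \<and> \<xi> < \<alpha>2 \<and>
           {y. p2 y = 0} = {\<alpha>1, \<alpha>2} \<and>
           continuous_on {..<\<alpha>1} g \<and> strict_mono_on {..<\<alpha>1} g \<and>
           continuous_on {\<alpha>1<..<\<alpha>2} g \<and> strict_mono_on {\<alpha>1<..<\<alpha>2} g \<and>
           continuous_on {\<alpha>2<..} g \<and> strict_mono_on {\<alpha>2<..} g \<and>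
           g 0 = 0 \<and>
           filterlim g at_top (at_left \<alpha>1) \<and>
           (\<forall>Ebar E S0 S1 F Y0 Y1. 0 < Ebar \<longrightarrow>
              ptm_BMSS a0 b0 c0 a1 b1 c1 Ebar Fbar Sbar E S0 S1 F Y0 Y1 \<longrightarrow>
              E = g Y0 \<and> 0 < Y0 \<and> Y0 < \<alpha>1)"
proof -
  have dp: "\<delta> > 0" unfolding \<delta>_def ptm_delta_def using assms by simp
  have gp: "\<gamma> > 0" unfolding \<gamma>_def ptm_gamma_def using assms dp \<delta>_def by simp
  have lp: "lam > 0" unfolding lam_def ptm_lambda_def using assms gp \<gamma>_def by simp
  obtain \<alpha>1 \<alpha>2 where H:
    "0 < \<alpha>1 \<and> \<alpha>1 < \<xi> \<and> \<xi> < \<alpha>2 \<and>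
           {y. p2 y = 0} = {\<alpha>1, \<alpha>2} \<and>
           continuous_on {..<\<alpha>1} g \<and> strict_mono_on {..<\<alpha>1} g \<and>
           continuous_on {\<alpha>1<..<\<alpha>2} g \<and> strict_mono_on {\<alpha>1<..<\<alpha>2} g \<and>
           continuous_on {\<alpha>2<..} g \<and> strict_mono_on {\<alpha>2<..} g \<and>
           g 0 = 0 \<and>
           filterlim g at_top (at_left \<alpha>1)"
    and B: "\<forall>Ebar E S0 S1 F Y0 Y1. 0 < Ebar \<longrightarrow>
              (0 \<le> E \<and> 0 \<le> S0 \<and> 0 \<le> S1 \<and> 0 \<le> F \<and> 0 \<le> Y0 \<and> 0 \<le> Y1 \<and>
               Y0 = \<gamma> * F * S1 \<and> Y1 = \<delta> * F * S1 \<and> lam * F * S1 = S0 * E \<and>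
               Fbar = F + Y1 \<and> Ebar = E + Y0 \<and> Sbar = S0 + S1 + Y0 + Y1) \<longrightarrow>
              E = g Y0 \<and> 0 < Y0 \<and> Y0 < \<alpha>1"
    using core[OF dp gp lp assms(7,8)] unfolding g_def p1_def p2_def \<xi>_def by blast
  show ?thesis
  proof (intro exI conjI)
    show "\<forall>Ebar E S0 S1 F Y0 Y1. 0 < Ebar \<longrightarrow>
              ptm_BMSS a0 b0 c0 a1 b1 c1 Ebar Fbar Sbar E S0 S1 F Y0 Y1 \<longrightarrow>
              E = g Y0 \<and> 0 < Y0 \<and> Y0 < \<alpha>1"
      using B unfolding ptm_BMSS_def ptm_steady_state_def
        \<delta>_def[symmetric] \<gamma>_def[symmetric] lam_def[symmetric] by blast
  qed (use H in blast)+
qed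

end
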